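(* Let $p>q>1$ be relatively prime integers, let $\mathbf{x}$ be a $\frac pq$-automatic sequence produced by the deterministic finite automaton with output $\mathcal{A}=(Q,q_0,A_p,\delta,\tau)$, and let $T(L_{\frac pq})$ be decorated by $\mathbf{x}$. Then for all $h\ge 1$, the number $\#F_h$ of distinct factors of height $h$ of $T(L_{\frac pq})$ satisfies $\#F_h\le 1+q^h\cdot\#Q$.
   Context: $A_p=\{0,\ldots,p-1\}$; for $w=w_\ell\cdots w_0\in A_p^*$, $\mathrm{val}_{\frac pq}(w)=\sum_{i=0}^{\ell}\frac{w_i}{q}(\frac pq)^i$; $\mathrm{rep}_{\frac pq}(n)$ is the unique word not starting with $0$ of value $n$ ($\mathrm{rep}_{\frac pq}(0)=\varepsilon$); $L_{\frac pq}=\{\mathrm{rep}_{\frac pq}(n):n\ge0\}$. $\mathbf{x}$ is $\frac pq$-automatic via $\mathcal{A}$ if $x_n=\tau(\delta(q_0,\mathrm{rep}_{\frac pq}(n)))$ for all $n$. $T(L_{\frac pq})$ is the tree whose nodes are the words of $L_{\frac pq}$, with an edge labeled $d$ from $w$ to $wd$ whenever $w,wd\in L_{\frac pq}$; node $w$ has decoration $x_{\mathrm{val}_{\frac pq}(w)}$. For $w\in L_{\frac pq}$ and $h\ge0$, the factor $T[w,h]$ has domain $w^{-1}L_{\frac pq}\cap A_p^{\le h}$ and node $u$ of it has decoration $x_{\mathrm{val}_{\frac pq}(wu)}$; two factors of height $h$ are equal if they have the same domain and the same decoration at each node. $F_h=\{T[w,h]: w\in L_{\frac pq}\}$. *)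

theory Defs
  imports Main "HOL.Real"
begin

text \<open>Words are lists, most significant digit first: the word w_l ... w_0 is the
list [w_l, ..., w_0], so w_i is the entry at position (length w - 1 - i).\<close>

definition digits :: "nat \<Rightarrow> nat set" where
  "digits p = {0..<p}"

definition val_pq :: "nat \<Rightarrow> nat \<Rightarrow> nat list \<Rightarrow> real" where
  "val_pq p q w = (\<Sum>i<length w. (real (w ! (length w - 1 - i)) / real q) * (real p / real q) ^ i)"

definition rep_pq :: "nat \<Rightarrow> nat \<Rightarrow> nat \<Rightarrow> nat list" where
  "rep_pq p q n = (THE w. set w \<subseteq> digits p \<and> (w = [] \<or> hd w \<noteq> 0) \<and> val_pq p q w = real n)"

definition L_pq :: "nat \<Rightarrow> nat \<Rightarrow> nat list set" where
  "L_pq p q = {rep_pq p q n | n. True}"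

definition delta_star :: "('s \<Rightarrow> nat \<Rightarrow> 's) \<Rightarrow> 's \<Rightarrow> nat list \<Rightarrow> 's" where
  "delta_star \<delta> s w = foldl \<delta> s w"

definition pq_automatic_via ::
  "nat \<Rightarrow> nat \<Rightarrow> (nat \<Rightarrow> 'b) \<Rightarrow> 's set \<Rightarrow> 's \<Rightarrow> ('s \<Rightarrow> nat \<Rightarrow> 's) \<Rightarrow> ('s \<Rightarrow> 'b) \<Rightarrow> bool" where
  "pq_automatic_via p q x Q q0 \<delta> \<tau> \<longleftrightarrow>
     finite Q \<and> q0 \<in> Q \<and> (\<forall>s\<in>Q. \<forall>d\<in>digits p. \<delta> s d \<in> Q) \<and>
     (\<forall>n. x n = \<tau> (delta_star \<delta> q0 (rep_pq p q n)))"

text \<open>The factor T[w,h] of the tree T(L_{p/q}) decorated by x, as a partial map: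
  its domain is w^{-1}L_{p/q} \<inter> A_p^{\<le>h}, and node u carries x_{val(wu)}
  (val(wu) is a natural number since wu \<in> L_{p/q}).\<close>
definition factor_pq :: "nat \<Rightarrow> nat \<Rightarrow> (nat \<Rightarrow> 'b) \<Rightarrow> nat list \<Rightarrow> nat \<Rightarrow> nat list \<Rightarrow> 'b option" where
  "factor_pq p q x w h = (\<lambda>u.
     if set u \<subseteq> digits p \<and> length u \<le> h \<and> w @ u \<in> L_pq p q
     then Some (x (nat \<lfloor>val_pq p q (w @ u)\<rfloor>)) else None)"

definition F_pq :: "nat \<Rightarrow> nat \<Rightarrow> (nat \<Rightarrow> 'b) \<Rightarrow> nat \<Rightarrow> (nat list \<Rightarrow> 'b option) set" where
  "F_pq p q x h = {factor_pq p q x w h | w. w \<in> L_pq p q}"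

end

theory Submission
  imports Defs
begin

lemma val_nil[simp]: "val_pq p q [] = 0"
  by (simp add: val_pq_def)

lemma val_snoc:
  "val_pq p q (w @ [a]) = real p / real q * val_pq p q w + real a / real q"
proof -
  have "val_pq p q (w @ [a]) =
     (\<Sum>i<Suc (length w). (real ((w@[a]) ! (length w - i)) / real q) * (real p / real q) ^ i)"
    by (simp add: val_pq_def)
  also have "\<dots> = real a / real q +
     (\<Sum>i<length w. (real ((w@[a]) ! (length w - Suc i)) / real q) * (real p / real q) ^ Suc i)"
    by (subst sum.lessThan_Suc_shift) simp
  also have "(\<Sum>i<length w. (real ((w@[a]) ! (length w - Suc i)) / real q) * (real p / real q) ^ Suc i)
     = real p / real q * (\<Sum>i<length w. (real (w ! (length w - 1 - i)) / real q) * (real p / real q) ^ i)"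
    by (subst sum_distrib_left, rule sum.cong) (auto simp: nth_append)
  finally show ?thesis by (simp add: val_pq_def)
qed

lemma val_append:
  "val_pq p q (w @ u) = (real p / real q) ^ length u * val_pq p q w + val_pq p q u"
proof (induction u rule: rev_induct)
  case Nil then show ?case by simp
next
  case (snoc a u)
  have "val_pq p q (w @ u @ [a]) = real p / real q * val_pq p q (w @ u) + real a / real q"
    using val_snoc[of p q "w @ u" a] by simp
  then show ?case using snoc by (simp add: val_snoc algebra_simps)
qed

lemma val_nonneg: "val_pq p q w \<ge> 0"
  by (auto simp: val_pq_def intro!: sum_nonneg)

lemma val_pos:
  assumes "q > 0" "p > 0" "w \<noteq> []" "hd w \<noteq> 0"
  shows "val_pq p q w > 0"
proof -
  obtain a v where w: "w = [a] @ v" "a \<noteq> 0" using assms by (cases w) auto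
  have "val_pq p q w = (real p / real q) ^ length v * (real a / real q) + val_pq p q v"
    using w val_append[of p q "[a]" v] val_snoc[of p q "[]" a] by simp
  moreover have "(real p / real q) ^ length v * (real a / real q) > 0"
    using assms w by simp
  ultimately show ?thesis using val_nonneg[of p q v] by linarith
qed

lemma val_int: "\<exists>N::nat. val_pq p q w * real q ^ length w = real N"
proof (induction w rule: rev_induct)
  case Nil then show ?case by simp
next
  case (snoc a w)
  then obtain N where N: "val_pq p q w * real q ^ length w = real N" by blast
  show ?case
  proof (cases "q = 0")
    case True then show ?thesis by (auto simp: val_pq_def)
  next
    case False
    have "val_pq p q (w @ [a]) * real q ^ length (w @ [a]) = real p * (val_pq p q w * real q ^ length w) + real a * real q ^ length w"
      using False by (simp add: val_snoc field_simps)
    then show ?thesis using N by (intro exI[of _ "p * N + a * q ^ length w"]) simp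
  qed
qed


definition good :: "nat \<Rightarrow> nat list \<Rightarrow> bool" where
  "good p w \<longleftrightarrow> set w \<subseteq> digits p \<and> (w = [] \<or> hd w \<noteq> 0)"

lemma val_prefix_nat:
  assumes "coprime p q" "q > 0" "p > 0" "val_pq p q (w @ [a]) = real n"
  shows "\<exists>m::nat. val_pq p q w = real m"
proof -
  obtain N where N: "val_pq p q w * real q ^ length w = real N" using val_int by blast
  have pv: "real p * val_pq p q w = real q * real n - real a"
    using assms(2,4) by (simp add: val_snoc field_simps)
  have "real q * real n - real a \<ge> 0" using pv val_nonneg[of p q w] by (metis mult_nonneg_nonneg of_nat_0_le_iff)
  then have le: "a \<le> q * n" by (metis diff_ge_0_iff_ge of_nat_le_iff of_nat_mult)
  have "real (p * N) = (real p * val_pq p q w) * real q ^ length w"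
    using N by (simp add: algebra_simps)
  also have "\<dots> = (real q * real n - real a) * real q ^ length w" using pv by simp
  also have "\<dots> = real ((q * n - a) * q ^ length w)" using le by (simp add: of_nat_diff)
  finally have "real (p * N) = real ((q * n - a) * q ^ length w)" .
  then have eq: "p * N = (q * n - a) * q ^ length w" by (simp only: of_nat_eq_iff)
  have "q ^ length w dvd p * N" unfolding eq by simp
  moreover have "coprime (q ^ length w) p" using assms(1) by (simp add: coprime_commute)
  ultimately have "q ^ length w dvd N" using coprime_dvd_mult_right_iff by blast
  then obtain c where "N = q ^ length w * c" by blast
  then have "val_pq p q w = real c" using N assms(2) by simp
  then show ?thesis by blast
qed

lemma good_val_zero:
  assumes "q > 0" "p > 0" "good p w" "val_pq p q w = 0"
  shows "w = []"
  using val_pos[of q p w] assms by (auto simp: good_def)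

lemma rep_unique:
  assumes "coprime p q" "q > 0" "p > q"
  shows "good p w \<Longrightarrow> good p w' \<Longrightarrow> val_pq p q w = real n \<Longrightarrow> val_pq p q w' = real n \<Longrightarrow> w = w'"
proof (induction n arbitrary: w w' rule: less_induct)
  case (less n)
  have p0: "p > 0" using assms by simp
  show ?case
  proof (cases "n = 0")
    case True
    then show ?thesis using good_val_zero[OF assms(2) p0] less.prems by (metis of_nat_0)
  next
    case False
    have "w \<noteq> []" "w' \<noteq> []" using less.prems False by auto
    then obtain v a v' a' where w: "w = v @ [a]" and w': "w' = v' @ [a']"
      by (metis rev_exhaust)
    obtain m where m: "val_pq p q v = real m" using val_prefix_nat[OF assms(1,2) p0] less.prems w by blast
    obtain m' where m': "val_pq p q v' = real m'" using val_prefix_nat[OF assms(1,2) p0] less.prems w' by blast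
    have "real n = real p / real q * real m + real a / real q" using less.prems w m val_snoc by metis
    then have "real (q * n) = real (p * m + a)" using assms(2) by (simp add: field_simps)
    then have e1: "q * n = p * m + a" by (simp only: of_nat_eq_iff)
    have "real n = real p / real q * real m' + real a' / real q" using less.prems w' m' val_snoc by metis
    then have "real (q * n) = real (p * m' + a')" using assms(2) by (simp add: field_simps)
    then have e2: "q * n = p * m' + a'" by (simp only: of_nat_eq_iff)
    have "a < p" "a' < p" using less.prems w w' by (auto simp: good_def digits_def)
    then have am: "a = a'" "m = m'" using e1 e2
      by (metis add.commute mod_mult_self2 mod_less, metis add.commute div_mult_self2 div_less add_0 p0 less_not_refl2 \<open>a < p\<close> mult.commute)
    have mn: "m < n"
    proof -
      have "p * m \<le> q * n" using e1 by simp
      also have "q * n < p * n" using assms False by simp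
      finally show ?thesis by simp
    qed
    have gv: "good p v" "good p v'" using less.prems w w' by (auto simp: good_def hd_append split: if_splits)
    have "v = v'" using less.IH[OF mn gv] m m' am by simp
    then show ?thesis using w w' am by simp
  qed
qed

lemma rep_exists:
  assumes "q > 0" "p > q"
  shows "\<exists>w. good p w \<and> val_pq p q w = real n"
proof (induction n rule: less_induct)
  case (less n)
  show ?case
  proof (cases "n = 0")
    case True then show ?thesis by (intro exI[of _ "[]"]) (simp add: good_def)
  next
    case False
    define m where "m = q * n div p"
    define a where "a = q * n mod p"
    have qn: "q * n = p * m + a" unfolding m_def a_def by simp
    have "m < n"
    proof -
      have "p * m \<le> q * n" using qn by simp
      also have "q * n < p * n" using assms False by simp
      finally show ?thesis by simp
    qed
    then obtain v where v: "good p v" "val_pq p q v = real m" using less.IH by blast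
    have ap: "a < p" unfolding a_def using assms by simp
    have "val_pq p q (v @ [a]) = real n"
    proof -
      have "real (q * n) = real (p * m + a)" using qn by simp
      then show ?thesis using assms(1) v by (simp add: val_snoc field_simps)
    qed
    moreover have "good p (v @ [a])"
    proof (cases "v = []")
      case True
      then have "m = 0" using v by simp
      then have "a = q * n" using qn by simp
      then have "a \<noteq> 0" using assms False by simp
      then show ?thesis using True ap by (simp add: good_def digits_def)
    next
      case False
      then show ?thesis using v ap by (auto simp: good_def digits_def)
    qed
    ultimately show ?thesis by blast
  qed
qed

lemma rep_char:
  assumes "coprime p q" "q > 0" "p > q"
  shows "good p (rep_pq p q n) \<and> val_pq p q (rep_pq p q n) = real n"
    and "good p w \<Longrightarrow> val_pq p q w = real n \<Longrightarrow> rep_pq p q n = w"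
proof -
  obtain w0 where w0: "good p w0" "val_pq p q w0 = real n" using rep_exists[OF assms(2,3)] by blast
  have th: "rep_pq p q n = w0" unfolding rep_pq_def
    apply (rule the_equality)
    using w0 rep_unique[OF assms] by (auto simp: good_def)
  show "good p (rep_pq p q n) \<and> val_pq p q (rep_pq p q n) = real n" using th w0 by simp
  show "good p w \<Longrightarrow> val_pq p q w = real n \<Longrightarrow> rep_pq p q n = w"
    using th w0 rep_unique[OF assms] by metis
qed

lemma L_char:
  assumes "coprime p q" "q > 0" "p > q"
  shows "w \<in> L_pq p q \<longleftrightarrow> good p w \<and> (\<exists>n::nat. val_pq p q w = real n)"
  using rep_char[OF assms] unfolding L_pq_def by blast


lemma foldl_in_Q:
  assumes "\<forall>s\<in>Q. \<forall>d\<in>digits p. \<delta> s d \<in> Q"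
  shows "s \<in> Q \<Longrightarrow> set w \<subseteq> digits p \<Longrightarrow> foldl \<delta> s w \<in> Q"
  using assms by (induction w arbitrary: s) auto

lemma dom_iff:
  assumes "coprime p q" "q > 0" "p > q" "w \<in> L_pq p q" "w \<noteq> []" "val_pq p q w = real n"
    "set u \<subseteq> digits p" "val_pq p q u * real q ^ length u = real U"
  shows "w @ u \<in> L_pq p q \<longleftrightarrow> q ^ length u dvd p ^ length u * n + U"
proof -
  have gw: "good p w" using assms L_char by blast
  then have g: "good p (w @ u)" using assms(5,7) by (auto simp: good_def)
  have key: "val_pq p q (w @ u) * real q ^ length u = real (p ^ length u * n + U)"
    using assms(2,6,8) by (simp add: val_append field_simps power_divide)
  show ?thesis
  proof
    assume "w @ u \<in> L_pq p q"
    then obtain m where "val_pq p q (w @ u) = real m" using L_char[OF assms(1-3)] by blast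
    then have "real (m * q ^ length u) = real (p ^ length u * n + U)" using key by simp
    then have "m * q ^ length u = p ^ length u * n + U" by (simp only: of_nat_eq_iff)
    then show "q ^ length u dvd p ^ length u * n + U" by (metis dvd_triv_right)
  next
    assume "q ^ length u dvd p ^ length u * n + U"
    then obtain c where c: "p ^ length u * n + U = q ^ length u * c" by blast
    have "val_pq p q (w @ u) * real q ^ length u = real c * real q ^ length u"
      using key c by simp
    then have "val_pq p q (w @ u) = real c" using assms(2) by simp
    then show "w @ u \<in> L_pq p q" using L_char[OF assms(1-3)] g by blast
  qed
qed

lemma factor_eq:
  assumes "coprime p q" "q > 0" "p > q"
    and aut: "\<And>n. x n = \<tau> (delta_star \<delta> q0 (rep_pq p q n))"
    and "w \<in> L_pq p q" "w \<noteq> []" "val_pq p q w = real n"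
    and "w' \<in> L_pq p q" "w' \<noteq> []" "val_pq p q w' = real n'"
    and md: "n mod q ^ h = n' mod q ^ h"
    and st: "delta_star \<delta> q0 w = delta_star \<delta> q0 w'"
  shows "factor_pq p q x w h = factor_pq p q x w' h"
proof
  fix u
  show "factor_pq p q x w h u = factor_pq p q x w' h u"
  proof (cases "set u \<subseteq> digits p \<and> length u \<le> h")
    case False
    have c1: "\<not> (set u \<subseteq> digits p \<and> length u \<le> h \<and> w @ u \<in> L_pq p q)" using False by blast
    have c2: "\<not> (set u \<subseteq> digits p \<and> length u \<le> h \<and> w' @ u \<in> L_pq p q)" using False by blast
    show ?thesis unfolding factor_pq_def by (simp only: if_not_P[OF c1] if_not_P[OF c2])
  next
    case True
    obtain U where U: "val_pq p q u * real q ^ length u = real U" using val_int by blast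
    have dvd: "q ^ length u dvd q ^ h" using True by (simp add: le_imp_power_dvd)
    have "n mod q ^ length u = n' mod q ^ length u"
      using mod_mod_cancel[OF dvd, of n] mod_mod_cancel[OF dvd, of n'] md by simp
    then have "(p ^ length u * n + U) mod q ^ length u = (p ^ length u * n' + U) mod q ^ length u"
      by (rule mod_add_cong[OF mod_mult_cong[OF refl] refl])
    then have iff: "w @ u \<in> L_pq p q \<longleftrightarrow> w' @ u \<in> L_pq p q"
      using dom_iff[OF assms(1-3,5-7) _ U] dom_iff[OF assms(1-3,8-10) _ U] True
      by (simp add: dvd_eq_mod_eq_0)
    have dec: "x (nat \<lfloor>val_pq p q (v @ u)\<rfloor>) = \<tau> (foldl \<delta> (delta_star \<delta> q0 v) u)"
      if "v @ u \<in> L_pq p q" for v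
    proof -
      have gm: "good p (v @ u) \<and> (\<exists>n::nat. val_pq p q (v @ u) = real n)"
        using iffD1[OF L_char[OF assms(1-3), of "v @ u"] that] .
      then obtain m where m: "val_pq p q (v @ u) = real m" by blast
      have gv: "good p (v @ u)" using gm by (rule conjunct1)
      have r: "rep_pq p q m = v @ u" by (rule rep_char(2)[OF assms(1-3) gv m])
      have "nat \<lfloor>val_pq p q (v @ u)\<rfloor> = m" unfolding m by simp
      then have "x (nat \<lfloor>val_pq p q (v @ u)\<rfloor>) = \<tau> (delta_star \<delta> q0 (v @ u))" using aut[of m] r by simp
      then show ?thesis by (simp add: delta_star_def)
    qed
    show ?thesis
    proof (cases "w @ u \<in> L_pq p q")
      case True
      have c1: "set u \<subseteq> digits p \<and> length u \<le> h \<and> w @ u \<in> L_pq p q"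
        using True \<open>set u \<subseteq> digits p \<and> length u \<le> h\<close> by blast
      have c2: "set u \<subseteq> digits p \<and> length u \<le> h \<and> w' @ u \<in> L_pq p q"
        using True iff \<open>set u \<subseteq> digits p \<and> length u \<le> h\<close> by blast
      have "factor_pq p q x w h u = Some (\<tau> (foldl \<delta> (delta_star \<delta> q0 w) u))"
        unfolding factor_pq_def using dec[OF True] by (simp only: if_P[OF c1])
      moreover have "factor_pq p q x w' h u = Some (\<tau> (foldl \<delta> (delta_star \<delta> q0 w') u))"
        unfolding factor_pq_def using dec[OF iffD1[OF iff True]] by (simp only: if_P[OF c2])
      ultimately show ?thesis using st by simp
    next
      case False
      have c1: "\<not> (set u \<subseteq> digits p \<and> length u \<le> h \<and> w @ u \<in> L_pq p q)" using False by blast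
      have c2: "\<not> (set u \<subseteq> digits p \<and> length u \<le> h \<and> w' @ u \<in> L_pq p q)" using False iff by blast
      show ?thesis unfolding factor_pq_def by (simp only: if_not_P[OF c1] if_not_P[OF c2])
    qed
  qed
qed

theorem mainTheorem10:
  fixes p q :: nat and x :: "nat \<Rightarrow> 'b" and Q :: "'s set" and q0 :: 's
    and \<delta> :: "'s \<Rightarrow> nat \<Rightarrow> 's" and \<tau> :: "'s \<Rightarrow> 'b"
  assumes "p > q" and "q > 1" and "coprime p q"
    and "pq_automatic_via p q x Q q0 \<delta> \<tau>"
    and "h \<ge> 1"
  shows "finite (F_pq p q x h) \<and> card (F_pq p q x h) \<le> 1 + q ^ h * card Q"
proof -
  have cp: "coprime p q" and q0': "q > 0" and pq: "p > q" using assms by auto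
  have fQ: "finite Q" and q0Q: "q0 \<in> Q" and cl: "\<forall>s\<in>Q. \<forall>d\<in>digits p. \<delta> s d \<in> Q"
    and aut: "\<And>n. x n = \<tau> (delta_star \<delta> q0 (rep_pq p q n))"
    using assms(4) unfolding pq_automatic_via_def by auto
  define key where "key w = (if w = [] then None
      else Some (nat \<lfloor>val_pq p q w\<rfloor> mod q ^ h, delta_star \<delta> q0 w))" for w
  define K where "K = insert None (Some ` ({..<q ^ h} \<times> Q))"
  define g where "g k = factor_pq p q x (SOME w. w \<in> L_pq p q \<and> key w = k) h" for k
  have fK: "finite K" using fQ unfolding K_def by simp
  have cK: "card K \<le> 1 + q ^ h * card Q"
  proof -
    have "card K \<le> Suc (card (Some ` ({..<q ^ h} \<times> Q)))" unfolding K_def using fQ by (simp add: card_insert_if)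
    also have "card (Some ` ({..<q ^ h} \<times> Q)) = q ^ h * card Q"
      by (simp add: card_image card_cartesian_product)
    finally show ?thesis by simp
  qed
  have sub: "F_pq p q x h \<subseteq> g ` K"
  proof
    fix f assume "f \<in> F_pq p q x h"
    then obtain w where w: "w \<in> L_pq p q" and f: "f = factor_pq p q x w h" unfolding F_pq_def by blast
    have gw: "good p w" using w L_char[OF cp q0' pq] by blast
    obtain n where n: "val_pq p q w = real n" using w L_char[OF cp q0' pq] by blast
    have kK: "key w \<in> K"
    proof (cases "w = []")
      case True then show ?thesis by (simp add: key_def K_def)
    next
      case False
      have "delta_star \<delta> q0 w \<in> Q" unfolding delta_star_def
        using foldl_in_Q[OF cl q0Q] gw by (simp add: good_def)
      then show ?thesis using False q0' by (simp add: key_def K_def)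
    qed
    define w' where "w' = (SOME w'. w' \<in> L_pq p q \<and> key w' = key w)"
    have w': "w' \<in> L_pq p q \<and> key w' = key w" unfolding w'_def by (rule someI[of _ w]) (simp add: w)
    have "factor_pq p q x w h = factor_pq p q x w' h"
    proof (cases "w = []")
      case True
      then have "w' = []" using w' by (simp add: key_def split: if_splits)
      then show ?thesis using True by simp
    next
      case False
      then have ne: "w' \<noteq> []" using w' by (simp add: key_def split: if_splits)
      obtain n' where n': "val_pq p q w' = real n'" using w' L_char[OF cp q0' pq] by blast
      have e: "n mod q ^ h = n' mod q ^ h \<and> delta_star \<delta> q0 w = delta_star \<delta> q0 w'"
        using w' False ne n n' by (simp add: key_def)
      have w'L: "w' \<in> L_pq p q" using w' by simp
      show ?thesis
        by (rule factor_eq[of p q x \<tau> \<delta> q0 w n w' n' h, OF cp q0' pq aut w False n w'L ne n' conjunct1[OF e] conjunct2[OF e]])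
    qed
    moreover have "g (key w) = factor_pq p q x w' h" unfolding g_def w'_def by (rule refl)
    ultimately have "f = g (key w)" unfolding f by simp
    then show "f \<in> g ` K" using kK by blast
  qed
  have fin: "finite (F_pq p q x h)" using sub fK finite_surj by blast
  have "card (F_pq p q x h) \<le> card (g ` K)" using sub fK by (simp add: card_mono)
  also have "\<dots> \<le> card K" using card_image_le fK by blast
  finally show ?thesis using fin cK by simp
qed

end
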